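(* Let $-D/2\le x_C<x_B\le D/2$, let $(\bar r_1^{BC},\bar r_2^{BC})$ be the unique intersection point of the boundary curves of $\mathcal{C}_f(x_B)$ and $\mathcal{C}_f(x_C)$, and let $(\bar r_1^B,\bar r_2^B)\in\partial\mathcal{C}_f(x_B)$ and $(\bar r_1^C,\bar r_2^C)\in\partial\mathcal{C}_f(x_C)$ be the points at which the upper-right common tangent line $\ell$ of the convex hull of $\mathcal{C}_f(x_B)\cup\mathcal{C}_f(x_C)$ touches the boundaries of $\mathcal{C}_f(x_B)$ and $\mathcal{C}_f(x_C)$, respectively. Then $0\le\bar r_1^B<\bar r_1^{BC}<\bar r_1^C$ and $0\le\bar r_2^C<\bar r_2^{BC}<\bar r_2^B$.
   Context: Fix $D>0$, $H>0$, $\beta_0>0$, $\bar P>0$. Ground users GU 1, GU 2 are at horizontal positions $x_1=-D/2$, $x_2=D/2$; for a UAV at horizontal position $x$ (altitude $H$), $h_k(x)=\beta_0/((x-x_k)^2+H^2)$. For $p_1,p_2\ge0$, $\mathcal{C}_{\rm MAC}(x,p_1,p_2)$ is the set of $(r_1,r_2)$, $r_1,r_2\ge0$, with $r_1\le\log_2(1+p_1h_1(x))$, $r_2\le\log_2(1+p_2h_2(x))$, $r_1+r_2\le\log_2(1+p_1h_1(x)+p_2h_2(x))$; the fixed-location capacity region is $\mathcal{C}_f(x)=\bigcup_{p_1,p_2\ge0,\,p_1+p_2\le\bar P}\mathcal{C}_{\rm MAC}(x,p_1,p_2)$. For $m\in\{B,C\}$, the boundary curve of $\mathcal{C}_f(x_m)$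 is $r_2^m(r_1)=\max\{r_2:(r_1,r_2)\in\mathcal{C}_f(x_m)\}$ for $0\le r_1\le\log_2(1+\bar Ph_1(x_m))$; the two curves $r_2^B$ and $r_2^C$ intersect at exactly one point, denoted $(\bar r_1^{BC},\bar r_2^{BC})$. *)

theory Defs
  imports Complex_Main
begin

text \<open>Channel gain from the UAV at horizontal position x to a GU at horizontal position xk.\<close>
definition chan :: "real \<Rightarrow> real \<Rightarrow> real \<Rightarrow> real \<Rightarrow> real" where
  "chan \<beta>0 H xk x = \<beta>0 / ((x - xk)^2 + H^2)"

definition h1 :: "real \<Rightarrow> real \<Rightarrow> real \<Rightarrow> real \<Rightarrow> real" where
  "h1 D H \<beta>0 x = chan \<beta>0 H (- D / 2) x"

definition h2 :: "real \<Rightarrow> real \<Rightarrow> real \<Rightarrow> real \<Rightarrow> real" where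
  "h2 D H \<beta>0 x = chan \<beta>0 H (D / 2) x"

definition C_MAC :: "real \<Rightarrow> real \<Rightarrow> real \<Rightarrow> real \<Rightarrow> real \<Rightarrow> real \<Rightarrow> (real \<times> real) set" where
  "C_MAC D H \<beta>0 x p1 p2 = {(r1, r2). r1 \<ge> 0 \<and> r2 \<ge> 0 \<and>
      r1 \<le> log 2 (1 + p1 * h1 D H \<beta>0 x) \<and>
      r2 \<le> log 2 (1 + p2 * h2 D H \<beta>0 x) \<and>
      r1 + r2 \<le> log 2 (1 + p1 * h1 D H \<beta>0 x + p2 * h2 D H \<beta>0 x)}"

definition C_f :: "real \<Rightarrow> real \<Rightarrow> real \<Rightarrow> real \<Rightarrow> real \<Rightarrow> (real \<times> real) set" where
  "C_f D H \<beta>0 P x = (\<Union>p1 \<in> {0..}. \<Union>p2 \<in> {0..}. if p1 + p2 \<le> P then C_MAC D H \<beta>0 x p1 p2 else {})"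

definition bcurve :: "real \<Rightarrow> real \<Rightarrow> real \<Rightarrow> real \<Rightarrow> real \<Rightarrow> real \<Rightarrow> real" where
  "bcurve D H \<beta>0 P x r1 = (GREATEST r2. (r1, r2) \<in> C_f D H \<beta>0 P x)"

definition bdom :: "real \<Rightarrow> real \<Rightarrow> real \<Rightarrow> real \<Rightarrow> real \<Rightarrow> real set" where
  "bdom D H \<beta>0 P x = {0 .. log 2 (1 + P * h1 D H \<beta>0 x)}"

end

theory Submission imports Defs begin

definition Fv :: "real \<Rightarrow> real \<Rightarrow> real \<Rightarrow> real \<Rightarrow> real" where
  "Fv a b P s = (if b \<le> a then a*(1+P*b)/(a+(s-1)*b) else (b*(1+P*a) - (b-a)*s)/(a*s))"

definition Fvd :: "real \<Rightarrow> real \<Rightarrow> real \<Rightarrow> real \<Rightarrow> real" where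
  "Fvd a b P s = (if b \<le> a then -(a*b*(1+P*b))/(a+(s-1)*b)^2 else -(b*(1+P*a))/(a*s^2))"

definition FF :: "real \<Rightarrow> real \<Rightarrow> real \<Rightarrow> real \<Rightarrow> real" where
  "FF a b P r = log 2 (Fv a b P (2 powr r))"

definition inreg :: "real \<Rightarrow> real \<Rightarrow> real \<Rightarrow> real \<Rightarrow> real \<Rightarrow> bool" where
  "inreg a b P r1 r2 \<longleftrightarrow> (\<exists>p1 p2. p1 \<ge> 0 \<and> p2 \<ge> 0 \<and> p1+p2 \<le> P \<and> r1 \<ge> 0 \<and> r2 \<ge> 0 \<and>
     r1 \<le> log 2 (1+p1*a) \<and> r2 \<le> log 2 (1+p2*b) \<and> r1 + r2 \<le> log 2 (1+p1*a+p2*b))"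

lemma mem_Cf: "(r1,r2) \<in> C_f D H \<beta>0 P x \<longleftrightarrow> inreg (h1 D H \<beta>0 x) (h2 D H \<beta>0 x) P r1 r2"
  unfolding C_f_def C_MAC_def inreg_def
  by (auto simp: mult.commute split: if_splits)

lemma Fv_ge1:
  assumes "a > 0" "b > 0" "P > 0" "1 \<le> s" "s \<le> 1 + P*a"
  shows "Fv a b P s \<ge> 1"
proof (cases "b \<le> a")
  case True
  have d: "a + (s-1)*b > 0" using assms by (simp add: add_pos_nonneg)
  have "(s-1)*b \<le> (P*a)*b" using assms by (intro mult_right_mono) auto
  then have "a+(s-1)*b \<le> a*(1+P*b)" by (simp add: algebra_simps)
  then show ?thesis using True d by (simp add: Fv_def)
next
  case False
  have d: "a*s > 0" using assms by simp
  have "b*s \<le> b*(1+P*a)" using assms by (intro mult_left_mono) auto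
  then have "a*s \<le> b*(1+P*a) - (b-a)*s" by (simp add: algebra_simps)
  then show ?thesis using False d by (simp add: Fv_def)
qed

lemma Fv_dec:
  assumes "a > 0" "b > 0" "P > 0" "1 \<le> s" "s < t"
  shows "Fv a b P t < Fv a b P s"
proof (cases "b \<le> a")
  case True
  have d: "a + (s-1)*b > 0" using assms by (simp add: add_pos_nonneg)
  have "(s-1)*b < (t-1)*b" using assms by simp
  then have "a + (s-1)*b < a + (t-1)*b" by simp
  moreover have "a*(1+P*b) > 0" using assms by (simp add: add_pos_pos)
  ultimately show ?thesis using True d by (simp add: Fv_def divide_strict_left_mono)
next
  case False
  have "(b*(1+P*a) - (b-a)*t)/(a*t) = b*(1+P*a)/(a*t) - (b-a)/a"
    using assms by (simp add: field_simps)
  moreover have "(b*(1+P*a) - (b-a)*s)/(a*s) = b*(1+P*a)/(a*s) - (b-a)/a"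
    using assms by (simp add: field_simps)
  moreover have "b*(1+P*a)/(a*t) < b*(1+P*a)/(a*s)"
    using assms by (intro divide_strict_left_mono) (auto simp: add_pos_pos)
  ultimately show ?thesis using False by (simp add: Fv_def)
qed

lemma Fv_deriv:
  assumes "a > 0" "b > 0" "P > 0" "1 \<le> s"
  shows "(Fv a b P has_real_derivative Fvd a b P s) (at s)"
proof (cases "b \<le> a")
  case True
  have d: "a + (s-1)*b > 0" using assms by (simp add: add_pos_nonneg)
  have "((\<lambda>s. a*(1+P*b)/(a+(s-1)*b)) has_real_derivative Fvd a b P s) (at s)"
    using True d by (auto intro!: derivative_eq_intros simp: Fvd_def power2_eq_square field_simps)
  then show ?thesis using True by (simp add: Fv_def[abs_def])
next
  case False
  have "((\<lambda>s. (b*(1+P*a) - (b-a)*s)/(a*s)) has_real_derivative Fvd a b P s) (at s)"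
    using False assms by (auto intro!: derivative_eq_intros simp: Fvd_def power2_eq_square field_simps)
  then show ?thesis using False by (simp add: Fv_def[abs_def])
qed


lemma Fv_pos_alg_upper:
  assumes "a > 0" "b > 0" "P > 0" "p1 \<ge> 0" "p2 \<ge> 0" "p1 + p2 \<le> P"
    and "1 \<le> s" "s \<le> 1 + p1*a" "0 < v" "v \<le> 1 + p2*b" "s*v \<le> 1 + p1*a + p2*b"
  shows "v \<le> Fv a b P s"
proof (cases "b \<le> a")
  case True
  have d: "a + (s-1)*b > 0" using assms by (simp add: add_pos_nonneg)
  have 1: "b*(s*v) \<le> b*(1 + p1*a + p2*b)" using assms by (intro mult_left_mono) auto
  have 2: "(a-b)*v \<le> (a-b)*(1+p2*b)" using assms True by (intro mult_left_mono) auto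
  have 3: "a*b*(p1+p2) \<le> a*b*P" using assms by (intro mult_left_mono) auto
  have "v*(a+(s-1)*b) \<le> a*(1+P*b)"
  proof -
    have "v*(a+(s-1)*b) = (a-b)*v + b*(s*v)" by (simp add: algebra_simps)
    also have "\<dots> \<le> (a-b)*(1+p2*b) + b*(1 + p1*a + p2*b)" using 1 2 by linarith
    also have "\<dots> = a + a*b*(p1+p2)" by (simp add: algebra_simps)
    also have "\<dots> \<le> a*(1+P*b)" using 3 by (simp add: algebra_simps)
    finally show ?thesis .
  qed
  then show ?thesis using True d by (simp add: Fv_def pos_le_divide_eq)
next
  case False
  have d: "a*s > 0" using assms by simp
  have 1: "a*(s*v) \<le> a*(1 + p1*a + p2*b)" using assms by (intro mult_left_mono) auto
  have 2: "(b-a)*s \<le> (b-a)*(1+p1*a)" using assms False by (intro mult_left_mono) auto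
  have 3: "a*b*(p1+p2) \<le> a*b*P" using assms by (intro mult_left_mono) auto
  have "v*(a*s) \<le> b*(1+P*a) - (b-a)*s"
  proof -
    have "v*(a*s) + (b-a)*s = (b-a)*s + a*(s*v)" by (simp add: algebra_simps)
    also have "\<dots> \<le> (b-a)*(1+p1*a) + a*(1 + p1*a + p2*b)" using 1 2 by linarith
    also have "\<dots> = b + a*b*(p1+p2)" by (simp add: algebra_simps)
    also have "\<dots> \<le> b*(1+P*a)" using 3 by (simp add: algebra_simps)
    finally show ?thesis by linarith
  qed
  then show ?thesis using False d by (simp add: Fv_def pos_le_divide_eq)
qed

lemma FF_upper:
  assumes "a > 0" "b > 0" "P > 0" "inreg a b P r1 r2"
  shows "r2 \<le> FF a b P r1"
proof -
  obtain p1 p2 where p: "p1 \<ge> 0" "p2 \<ge> 0" "p1+p2 \<le> P" "r1 \<ge> 0" "r2 \<ge> 0"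
     "r1 \<le> log 2 (1+p1*a)" "r2 \<le> log 2 (1+p2*b)" "r1 + r2 \<le> log 2 (1+p1*a+p2*b)"
    using assms(4) unfolding inreg_def by blast
  have pa: "1+p1*a > 0" "1+p2*b > 0" "1+p1*a+p2*b > 0" proof -
    have "p1*a \<ge> 0" "p2*b \<ge> 0" using p assms by auto
    then show "1+p1*a > 0" "1+p2*b > 0" "1+p1*a+p2*b > 0" by linarith+
  qed
  have s1: "2 powr r1 \<le> 1+p1*a" using p(6) pa le_log_iff[of 2 "1+p1*a" r1] by simp
  have v1: "2 powr r2 \<le> 1+p2*b" using p(7) pa le_log_iff[of 2 "1+p2*b" r2] by simp
  have sv: "2 powr r1 * 2 powr r2 \<le> 1+p1*a+p2*b"
    using p(8) pa le_log_iff[of 2 "1+p1*a+p2*b" "r1+r2"] by (simp add: powr_add)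
  have s0: "1 \<le> 2 powr r1" using p(4) by (simp add: ge_one_powr_ge_zero)
  have le: "2 powr r2 \<le> Fv a b P (2 powr r1)"
    by (rule Fv_pos_alg_upper[OF assms(1-3) p(1-3) s0 s1 _ v1 sv]) simp
  moreover have "0 < 2 powr r2" by simp
  ultimately have pos: "0 < Fv a b P (2 powr r1)" by linarith
  have "log 2 (2 powr r2) \<le> log 2 (Fv a b P (2 powr r1))"
    using pos le by (subst log_le_cancel_iff) auto
  then show ?thesis by (simp add: FF_def)
qed

lemma powr_FF:
  assumes "a > 0" "b > 0" "P > 0" "0 \<le> r" "r \<le> log 2 (1+P*a)"
  shows "2 powr FF a b P r = Fv a b P (2 powr r)" "FF a b P r \<ge> 0"
    "1 \<le> 2 powr r" "2 powr r \<le> 1 + P*a" "Fv a b P (2 powr r) \<ge> 1"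
proof -
  have pa: "1+P*a > 0" using assms by (simp add: add_pos_pos)
  show s0: "1 \<le> 2 powr r" using assms by (simp add: ge_one_powr_ge_zero)
  show s1: "2 powr r \<le> 1 + P*a" using assms pa le_log_iff[of 2 "1+P*a" r] by simp
  show V: "Fv a b P (2 powr r) \<ge> 1" by (rule Fv_ge1[OF assms(1-3) s0 s1])
  then show "2 powr FF a b P r = Fv a b P (2 powr r)" by (simp add: FF_def)
  show "FF a b P r \<ge> 0" using V by (simp add: FF_def)
qed

lemma FF_ach:
  assumes "a > 0" "b > 0" "P > 0" "0 \<le> r" "r \<le> log 2 (1+P*a)"
  shows "inreg a b P r (FF a b P r)"
proof -
  note F = powr_FF[OF assms]
  define s where "s = 2 powr r"
  define V where "V = Fv a b P s"
  have s0: "1 \<le> s" "s \<le> 1+P*a" using F s_def by auto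
  have key: "\<exists>p1 p2. p1 \<ge> 0 \<and> p2 \<ge> 0 \<and> p1+p2 \<le> P \<and> s \<le> 1+p1*a \<and> V \<le> 1+p2*b \<and> s*V \<le> 1+p1*a+p2*b"
  proof (cases "b \<le> a")
    case True
    have d: "a + (s-1)*b > 0" using assms s0 by (simp add: add_pos_nonneg)
    define p2 where "p2 = (P*a - s + 1)/(a + (s-1)*b)"
    define p1 where "p1 = P - p2"
    have p2: "p2 \<ge> 0" using s0 d by (simp add: p2_def)
    have p1e: "p1 = (s-1)*(P*b+1)/(a + (s-1)*b)" using d by (simp add: p1_def p2_def field_simps)
    have p1: "p1 \<ge> 0" using s0 d assms by (simp add: p1e)
    have Ve: "V = 1 + p2*b" using d True by (simp add: V_def Fv_def p2_def field_simps)
    have q: "p2*(a + (s-1)*b) = P*a - s + 1" using d by (simp add: p2_def)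
    have Ve2: "V*(a + (s-1)*b) = a*(1+P*b)" using d True by (simp add: V_def Fv_def)
    have "(s*V)*(a + (s-1)*b) = (1 + p1*a + p2*b)*(a + (s-1)*b)"
    proof -
      have "(s*V)*(a + (s-1)*b) = s*(V*(a + (s-1)*b))" by (simp only: mult.assoc)
      also have "\<dots> = s*(a*(1+P*b))" by (simp only: Ve2)
      also have "\<dots> = (a+(s-1)*b)*(1+P*a) + (b-a)*(P*a - s + 1)" by (simp add: algebra_simps)
      also have "\<dots> = (1 + p1*a + p2*b)*(a + (s-1)*b)" unfolding q[symmetric] p1_def
        by (simp add: algebra_simps)
      finally show ?thesis .
    qed
    then have sV: "s*V = 1 + p1*a + p2*b" using d by simp
    have "s*1 \<le> s*V" using Ve p2 assms s0 by (intro mult_left_mono) auto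
    have e: "s + s*(p2*b) = 1+p1*a+p2*b" using sV Ve by (simp add: algebra_simps)
    have "1*(p2*b) \<le> s*(p2*b)" using s0 p2 assms by (intro mult_right_mono) auto
    then have "s \<le> 1+p1*a" using e by linarith
    then show ?thesis using p1 p2 Ve sV by (intro exI[of _ p1] exI[of _ p2]) (auto simp: p1_def)
  next
    case False
    define p1 where "p1 = (s-1)/a"
    define p2 where "p2 = P - p1"
    have p1: "p1 \<ge> 0" using s0 assms by (simp add: p1_def)
    have p2: "p2 \<ge> 0" using s0 assms by (simp add: p2_def p1_def field_simps)
    have se: "s = 1 + p1*a" using assms by (simp add: p1_def)
    have sV: "s*V = 1 + p1*a + p2*b" using False assms s0
      by (simp add: V_def Fv_def p2_def p1_def field_simps; (simp add: algebra_simps)?)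
    have "1*(p1*a) \<le> V*(p1*a)" using p1 assms F(5) V_def s_def by (intro mult_right_mono) auto
    moreover have "s*V = V + V*(p1*a)" using se by (simp add: algebra_simps)
    ultimately have "V \<le> 1+p2*b" using sV by linarith
    then show ?thesis using p1 p2 se sV by (intro exI[of _ p1] exI[of _ p2]) (auto simp: p2_def)
  qed
  then obtain p1 p2 where p: "p1 \<ge> 0" "p2 \<ge> 0" "p1+p2 \<le> P" "s \<le> 1+p1*a" "V \<le> 1+p2*b" "s*V \<le> 1+p1*a+p2*b"
    by blast
  have pa: "1+p1*a > 0" "1+p2*b > 0" "1+p1*a+p2*b > 0" proof -
    have "p1*a \<ge> 0" "p2*b \<ge> 0" using p assms by auto
    then show "1+p1*a > 0" "1+p2*b > 0" "1+p1*a+p2*b > 0" by linarith+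
  qed
  have e1: "2 powr FF a b P r = V" using F V_def s_def by simp
  have "r \<le> log 2 (1+p1*a)" using p(4) pa le_log_iff[of 2 "1+p1*a" r] s_def by simp
  moreover have "FF a b P r \<le> log 2 (1+p2*b)" using p(5) pa le_log_iff[of 2 "1+p2*b"] e1 by simp
  moreover have "r + FF a b P r \<le> log 2 (1+p1*a+p2*b)" using p(6) pa le_log_iff[of 2 "1+p1*a+p2*b"] e1 s_def
    by (simp add: powr_add)
  ultimately show ?thesis unfolding inreg_def using p F assms by blast
qed


lemma transv:
  assumes pos: "aB > 0" "bB > 0" "aC > 0" "bC > 0" "P > 0"
    and ord: "aB < aC" "bC < bB" and s: "1 \<le> s"
    and eq: "Fv aB bB P s = Fv aC bC P s" and Vp: "Fv aB bB P s > 0"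
  shows "Fvd aB bB P s < Fvd aC bC P s"
proof -
  define V where "V = Fv aB bB P s"
  have VC: "Fv aC bC P s = V" using eq V_def by simp
  have V0: "V > 0" using Vp V_def by simp
  have s0: "s > 0" using s by simp
  have dB: "aB + (s-1)*bB > 0" using pos s by (simp add: add_pos_nonneg)
  have dC: "aC + (s-1)*bC > 0" using pos s by (simp add: add_pos_nonneg)
  have pB: "1 + P*bB > 0" "1+P*aB > 0" "1 + P*bC > 0" "1+P*aC > 0" using pos by (auto simp: add_pos_pos)
  have br1: "Fvd a b P s = -(V^2*b/(a*(1+P*b)))" if "b \<le> a" "Fv a b P s = V" "a > 0" "b > 0" for a b
  proof -
    have d: "a + (s-1)*b > 0" using that s by (simp add: add_pos_nonneg)
    have p: "1+P*b > 0" using that pos by (simp add: add_pos_pos)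
    have Ve: "V = a*(1+P*b)/(a+(s-1)*b)" using that by (simp add: Fv_def)
    have "Fvd a b P s = -(a*b*(1+P*b))/(a+(s-1)*b)^2" using that by (simp add: Fvd_def)
    also have "\<dots> = -((a*(1+P*b)/(a+(s-1)*b))^2*b/(a*(1+P*b)))"
    proof -
      have gen: "-(a*b*q)/dd^2 = -((a*q/dd)^2*b/(a*q))" if "dd \<noteq> 0" "q \<noteq> 0" "a \<noteq> 0" for dd q
        using that by (simp add: field_simps power2_eq_square)
      show ?thesis using gen[of "a+(s-1)*b" "1+P*b"] d p that by simp
    qed
    finally show ?thesis using Ve by simp
  qed
  have br2: "Fvd a b P s = -(b*(1+P*a)/(a*s^2))" if "\<not> b \<le> a" for a b
    using that by (simp add: Fvd_def)
  show ?thesis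
  proof (cases "bB \<le> aB")
    case T1: True
    have T2: "bC \<le> aC" using T1 ord by linarith
    have "bC*aB*(1+P*bB) < bB*aC*(1+P*bC)"
    proof -
      have "bC*aB < bB*aC" using pos ord by (intro mult_strict_mono) auto
      moreover have "P*bB*bC*aB < P*bB*bC*aC" using pos ord by simp
      ultimately show ?thesis by (simp add: algebra_simps)
    qed
    then have "bC/(aC*(1+P*bC)) < bB/(aB*(1+P*bB))" using pos pB
      by (simp add: divide_simps)
    then have "V^2 * (bC/(aC*(1+P*bC))) < V^2 * (bB/(aB*(1+P*bB)))" using V0 by (intro mult_strict_left_mono) auto
    then show ?thesis using br1[OF T1 V_def[symmetric]] br1[OF T2 VC] pos by simp
  next
    case F1: False
    show ?thesis
    proof (cases "bC \<le> aC")
      case F2: False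
      have "bC*(1+P*aC)/aC < bB*(1+P*aB)/aB"
      proof -
        have e: "b*(1+P*a)/a = b/a + P*b" if "a > 0" for a b :: real using that by (simp add: field_simps)
        have "bC/aC < bB/aB" using pos ord by (simp add: frac_less2 less_imp_le) 
        moreover have "P*bC < P*bB" using pos ord by simp
        ultimately show ?thesis using e[of aC bC] e[of aB bB] pos by linarith
      qed
      then have "bC*(1+P*aC)/aC/s^2 < bB*(1+P*aB)/aB/s^2" using s0 by (intro divide_strict_right_mono) auto
      then show ?thesis using br2[OF F1] br2[OF F2] by (simp add: divide_divide_eq_left)
    next
      case T2: True
      have eC: "aC*(1+P*bC) = V*(aC+(s-1)*bC)" using VC T2 dC by (simp add: Fv_def field_simps)
      have "-Fvd aC bC P s = V^2*bC/(V*(aC+(s-1)*bC))"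
        using br1[OF T2 VC] pos by (simp add: eC)
      also have "\<dots> = V*bC/(aC + (s-1)*bC)" using V0 by (simp add: power2_eq_square)
      also have "\<dots> \<le> V/s"
      proof -
        have "V*bC*s \<le> V*(aC + (s-1)*bC)" using V0 T2 by (simp add: algebra_simps)
        then show ?thesis using dC s0 by (simp add: divide_simps)
      qed
      also have "\<dots> < -Fvd aB bB P s"
      proof -
        have Ve: "V*(aB*s) = bB*(1+P*aB) - (bB-aB)*s" using F1 pos s0 V_def by (simp add: Fv_def)
        have "-Fvd aB bB P s = bB*(1+P*aB)/(aB*s^2)" using br2[OF F1] by simp
        also have "\<dots> = (V*(aB*s) + (bB-aB)*s)/(aB*s^2)" using Ve by simp
        also have "\<dots> = V/s + (bB-aB)/(aB*s)" using pos s0 by (simp add: field_simps power2_eq_square)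
        finally show ?thesis using F1 pos s0 by simp
      qed
      finally show ?thesis by simp
    qed
  qed
qed


lemma FF_0: assumes "a > 0" "b > 0" "P > 0" shows "FF a b P 0 = log 2 (1+P*b)"
proof -
  have "Fv a b P 1 = 1+P*b"
  proof (cases "b \<le> a")
    case True then show ?thesis using assms by (simp add: Fv_def)
  next
    case False
    have "b*(1+P*a) - (b-a)*1 = a*(1+P*b)" by (simp add: algebra_simps)
    then show ?thesis using False assms by (simp add: Fv_def)
  qed
  then show ?thesis by (simp add: FF_def)
qed

lemma FF_R1: assumes "a > 0" "b > 0" "P > 0" shows "FF a b P (log 2 (1+P*a)) = 0"
proof -
  have pa: "1+P*a > 0" "1+P*b > 0" using assms by (auto simp: add_pos_pos)
  have "Fv a b P (1+P*a) = 1"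
  proof (cases "b \<le> a")
    case True
    have "a+(1+P*a-1)*b = a*(1+P*b)" by (simp add: algebra_simps)
    then show ?thesis using True assms pa by (simp add: Fv_def)
  next
    case False
    have "b*(1+P*a) - (b-a)*(1+P*a) = a*(1+P*a)" by (simp add: algebra_simps)
    then show ?thesis using False assms pa by (simp add: Fv_def)
  qed
  then show ?thesis using pa by (simp add: FF_def)
qed

lemma FF_dec:
  assumes "a > 0" "b > 0" "P > 0" "0 \<le> r" "r < r'" "r' \<le> log 2 (1+P*a)"
  shows "FF a b P r' < FF a b P r"
proof -
  have r: "r \<le> log 2 (1+P*a)" using assms by simp
  note F1 = powr_FF[OF assms(1-4) r]
  note F2 = powr_FF[OF assms(1-3) _ assms(6)]
  have "2 powr r < 2 powr r'" using assms by simp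
  then have "Fv a b P (2 powr r') < Fv a b P (2 powr r)" using F1 assms by (intro Fv_dec) auto
  moreover have "Fv a b P (2 powr r') \<ge> 1" using F2 assms by simp
  ultimately show ?thesis by (simp add: FF_def)
qed

lemma d_pow2: "((\<lambda>r. 2 powr r) has_real_derivative 2 powr r * ln 2) (at r)"
proof -
  have "((\<lambda>r. exp (r * ln 2)) has_real_derivative exp (r * ln 2) * ln 2) (at r)"
    by (auto intro!: derivative_eq_intros)
  then show ?thesis by (simp add: powr_def)
qed

definition FFd :: "real \<Rightarrow> real \<Rightarrow> real \<Rightarrow> real \<Rightarrow> real" where
  "FFd a b P r = Fvd a b P (2 powr r) * 2 powr r / Fv a b P (2 powr r)"

lemma FF_deriv:
  assumes "a > 0" "b > 0" "P > 0" "0 \<le> r" "r \<le> log 2 (1+P*a)"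
  shows "(FF a b P has_real_derivative FFd a b P r) (at r)"
proof -
  note F = powr_FF[OF assms]
  have d1: "((\<lambda>r. Fv a b P (2 powr r)) has_real_derivative Fvd a b P (2 powr r) * (2 powr r * ln 2)) (at r)"
    by (rule DERIV_chain2[OF Fv_deriv[OF assms(1-3) F(3)] d_pow2])
  have V: "Fv a b P (2 powr r) > 0" using F by simp
  have "((\<lambda>r. log 2 (Fv a b P (2 powr r))) has_real_derivative
     1 / (ln 2 * Fv a b P (2 powr r)) * (Fvd a b P (2 powr r) * (2 powr r * ln 2))) (at r)"
    by (rule DERIV_chain2[OF DERIV_log[OF V] d1])
  moreover have "1 / (ln 2 * Fv a b P (2 powr r)) * (Fvd a b P (2 powr r) * (2 powr r * ln 2)) = FFd a b P r"
    using V by (simp add: FFd_def field_simps)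
  ultimately show ?thesis by (simp add: FF_def[abs_def])
qed

lemma hpos: assumes "H > 0" "\<beta>0 > 0" shows "h1 D H \<beta>0 x > 0" "h2 D H \<beta>0 x > 0"
  using assms by (auto simp: h1_def h2_def chan_def intro!: divide_pos_pos add_nonneg_pos)

lemma bcurve_FF:
  assumes "H > 0" "\<beta>0 > 0" "P > 0" "r \<in> bdom D H \<beta>0 P x"
  shows "bcurve D H \<beta>0 P x r = FF (h1 D H \<beta>0 x) (h2 D H \<beta>0 x) P r"
proof -
  note hp = hpos[OF assms(1,2), of D x]
  have r: "0 \<le> r" "r \<le> log 2 (1 + P * h1 D H \<beta>0 x)" using assms(4) by (auto simp: bdom_def)
  show ?thesis unfolding bcurve_def
  proof (rule Greatest_equality)
    show "(r, FF (h1 D H \<beta>0 x) (h2 D H \<beta>0 x) P r) \<in> C_f D H \<beta>0 P x"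
      unfolding mem_Cf by (rule FF_ach[OF hp assms(3) r])
  next
    fix y assume "(r, y) \<in> C_f D H \<beta>0 P x"
    then show "y \<le> FF (h1 D H \<beta>0 x) (h2 D H \<beta>0 x) P r"
      unfolding mem_Cf by (rule FF_upper[OF hp assms(3)])
  qed
qed


theorem lemma7:
  fixes D H \<beta>0 P xB xC r1BC r2BC r1B r2B r1C r2C w1 w2 c :: real
  assumes "D > 0" and "H > 0" and "\<beta>0 > 0" and "P > 0"
    and "- D / 2 \<le> xC" and "xC < xB" and "xB \<le> D / 2"
    \<comment> \<open>(r1BC, r2BC) is the unique intersection point of the two boundary curves\<close>
    and "r1BC \<in> bdom D H \<beta>0 P xB" and "r1BC \<in> bdom D H \<beta>0 P xC"
    and "r2BC = bcurve D H \<beta>0 P xB r1BC" and "r2BC = bcurve D H \<beta>0 P xC r1BC"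
    and "\<forall>r1 \<in> bdom D H \<beta>0 P xB \<inter> bdom D H \<beta>0 P xC.
           bcurve D H \<beta>0 P xB r1 = bcurve D H \<beta>0 P xC r1 \<longrightarrow> r1 = r1BC"
    \<comment> \<open>the touching points lie on the respective boundary curves\<close>
    and "r1B \<in> bdom D H \<beta>0 P xB" and "r2B = bcurve D H \<beta>0 P xB r1B"
    and "r1C \<in> bdom D H \<beta>0 P xC" and "r2C = bcurve D H \<beta>0 P xC r1C"
    \<comment> \<open>the line w1 r1 + w2 r2 = c with upper-right normal supports the union
        (equivalently its convex hull) and touches both boundaries at these points\<close>
    and "w1 \<ge> 0" and "w2 \<ge> 0" and "(w1, w2) \<noteq> (0, 0)"
    and "\<forall>(r1, r2) \<in> C_f D H \<beta>0 P xB \<union> C_f D H \<beta>0 P xC. w1 * r1 + w2 * r2 \<le> c"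
    and "w1 * r1B + w2 * r2B = c" and "w1 * r1C + w2 * r2C = c"
  shows "0 \<le> r1B \<and> r1B < r1BC \<and> r1BC < r1C \<and> 0 \<le> r2C \<and> r2C < r2BC \<and> r2BC < r2B"
proof -
  define aB where "aB = h1 D H \<beta>0 xB"
  define bB where "bB = h2 D H \<beta>0 xB"
  define aC where "aC = h1 D H \<beta>0 xC"
  define bC where "bC = h2 D H \<beta>0 xC"
  define R1B where "R1B = log 2 (1+P*aB)"
  define R1C where "R1C = log 2 (1+P*aC)"
  define fB where "fB = FF aB bB P"
  define fC where "fC = FF aC bC P"
  have pos: "aB > 0" "bB > 0" "aC > 0" "bC > 0"
    using hpos[OF assms(2,3)] by (auto simp: aB_def bB_def aC_def bC_def)
  have P: "P > 0" using assms(4) by simp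
  have ab: "aB < aC" "bC < bB"
  proof -
    have "(xC + D/2)^2 < (xB + D/2)^2" using assms(1,2,3,5,6,7) by (intro power_strict_mono) auto
    then have "(xC - (-D/2))^2 + H^2 < (xB - (-D/2))^2 + H^2" by simp
    moreover have "0 < (xC - (-D/2))^2 + H^2" using assms(1,2,3,5,6,7) by (intro add_nonneg_pos) auto
    ultimately show "aB < aC" using assms(1,2,3,5,6,7)
      unfolding aB_def aC_def h1_def chan_def by (intro divide_strict_left_mono) auto
    have "(D/2 - xB)^2 < (D/2 - xC)^2" using assms(1,2,3,5,6,7) by (intro power_strict_mono) auto
    then have "(xB - D/2)^2 + H^2 < (xC - D/2)^2 + H^2" by (simp add: power2_commute)
    moreover have "0 < (xB - D/2)^2 + H^2" using assms(1,2,3,5,6,7) by (intro add_nonneg_pos) auto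
    ultimately show "bC < bB" using assms(1,2,3,5,6,7)
      unfolding bB_def bC_def h2_def chan_def by (intro divide_strict_left_mono) auto
  qed
  have pa: "1+P*aB > 0" "1+P*aC > 0" "1+P*bB > 0" "1+P*bC > 0" using pos P by (auto simp: add_pos_pos)
  have RR: "R1B < R1C" using ab pa P unfolding R1B_def R1C_def by simp
  have R1B0: "0 \<le> R1B" unfolding R1B_def using pa(1) pos P by (subst zero_le_log_cancel_iff) (auto simp: less_imp_le)
  have R2: "log 2 (1+P*bC) < log 2 (1+P*bB)" using ab pa P by simp
  have domB: "bdom D H \<beta>0 P xB = {0..R1B}" by (simp add: bdom_def R1B_def aB_def)
  have domC: "bdom D H \<beta>0 P xC = {0..R1C}" by (simp add: bdom_def R1C_def aC_def)
  have bcB: "bcurve D H \<beta>0 P xB r = fB r" if "0 \<le> r" "r \<le> R1B" for r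
    using bcurve_FF[OF assms(2,3,4), of r D xB] that domB by (simp add: fB_def aB_def bB_def)
  have bcC: "bcurve D H \<beta>0 P xC r = fC r" if "0 \<le> r" "r \<le> R1C" for r
    using bcurve_FF[OF assms(2,3,4), of r D xC] that domC by (simp add: fC_def aC_def bC_def)
  have r1BC: "0 \<le> r1BC" "r1BC \<le> R1B" using assms(8) domB by auto
  have r1B: "0 \<le> r1B" "r1B \<le> R1B" using assms(13) domB by auto
  have r1C: "0 \<le> r1C" "r1C \<le> R1C" using assms(15) domC by auto
  have e2BC: "r2BC = fB r1BC" "r2BC = fC r1BC"
    using assms(10,11) bcB[OF r1BC] bcC[of r1BC] r1BC RR by auto
  have e2B: "r2B = fB r1B" using assms(14) bcB[OF r1B] by simp
  have e2C: "r2C = fC r1C" using assms(16) bcC[OF r1C] by simp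
  have uniq: "r = r1BC" if "0 \<le> r" "r \<le> R1B" "fB r = fC r" for r
    using assms(12) that bcB[of r] bcC[of r] RR domB domC by auto
  have supB: "w1*r + w2*fB r \<le> c" if "0 \<le> r" "r \<le> R1B" for r
  proof -
    have "(r, fB r) \<in> C_f D H \<beta>0 P xB" unfolding mem_Cf fB_def aB_def bB_def
      using FF_ach[OF pos(1,2) P, of r] that by (simp add: R1B_def aB_def bB_def)
    then show ?thesis using assms(20) by auto
  qed
  have supC: "w1*r + w2*fC r \<le> c" if "0 \<le> r" "r \<le> R1C" for r
  proof -
    have "(r, fC r) \<in> C_f D H \<beta>0 P xC" unfolding mem_Cf fC_def aC_def bC_def
      using FF_ach[OF pos(3,4) P, of r] that by (simp add: R1C_def aC_def bC_def)
    then show ?thesis using assms(20) by auto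
  qed
  have decB: "fB r' < fB r" if "0 \<le> r" "r < r'" "r' \<le> R1B" for r r'
    using FF_dec[OF pos(1,2) P that(1,2)] that(3) by (simp add: fB_def R1B_def)
  have decC: "fC r' < fC r" if "0 \<le> r" "r < r'" "r' \<le> R1C" for r r'
    using FF_dec[OF pos(3,4) P that(1,2)] that(3) by (simp add: fC_def R1C_def)
  have nnC: "fC r \<ge> 0" if "0 \<le> r" "r \<le> R1C" for r
    using powr_FF(2)[OF pos(3,4) P that(1)] that(2) by (simp add: fC_def R1C_def)
  have fB0: "fB 0 = log 2 (1+P*bB)" using FF_0[OF pos(1,2) P] by (simp add: fB_def)
  have fC0: "fC 0 = log 2 (1+P*bC)" using FF_0[OF pos(3,4) P] by (simp add: fC_def)
  have fBR: "fB R1B = 0" using FF_R1[OF pos(1,2) P] by (simp add: fB_def R1B_def)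
  have fCR: "fC R1C = 0" using FF_R1[OF pos(3,4) P] by (simp add: fC_def R1C_def)
  have fCRB: "fC R1B > 0" using decC[OF R1B0 RR order_refl] fCR by simp
  have dB: "(fB has_real_derivative FFd aB bB P r) (at r)" if "0 \<le> r" "r \<le> R1B" for r
    using FF_deriv[OF pos(1,2) P that(1)] that(2) by (simp add: fB_def R1B_def)
  have dC: "(fC has_real_derivative FFd aC bC P r) (at r)" if "0 \<le> r" "r \<le> R1C" for r
    using FF_deriv[OF pos(3,4) P that(1)] that(2) by (simp add: fC_def R1C_def)
  have cont: "isCont (\<lambda>r. fB r - fC r) r" if "0 \<le> r" "r \<le> R1B" for r
    using DERIV_isCont[OF dB[OF that]] DERIV_isCont[OF dC[of r]] that RR by auto
  have dpos: "fC r < fB r" if rr: "0 \<le> r" "r < r1BC" for r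
  proof (rule ccontr)
    assume "\<not> fC r < fB r"
    then have "(\<lambda>r. fB r - fC r) r \<le> 0" by simp
    moreover have "0 \<le> (\<lambda>r. fB r - fC r) 0" using fB0 fC0 R2 by simp
    ultimately obtain x where "0 \<le> x" "x \<le> r" "fB x - fC x = 0"
      using IVT2[of "\<lambda>r. fB r - fC r" r 0 0] rr cont r1BC by auto
    then show False using uniq[of x] rr r1BC by auto
  qed
  have dneg: "fB r < fC r" if rr: "r1BC < r" "r \<le> R1B" for r
  proof (rule ccontr)
    assume "\<not> fB r < fC r"
    then have "0 \<le> (\<lambda>r. fB r - fC r) r" by simp
    moreover have "(\<lambda>r. fB r - fC r) R1B \<le> 0" using fBR fCRB by simp
    ultimately obtain x where "r \<le> x" "x \<le> R1B" "fB x - fC x = 0"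
      using IVT2[of "\<lambda>r. fB r - fC r" R1B 0 r] rr cont r1BC by auto
    then show False using uniq[of x] rr r1BC by auto
  qed
  have w2: "w2 > 0"
  proof (rule ccontr)
    assume "\<not> w2 > 0"
    then have "w2 = 0" "w1 > 0" using assms(17-19) by auto
    then have "w1*R1C \<le> c" "c = w1*r1B" using supC[of R1C] fCR RR R1B0 assms(21) by auto
    moreover have "w1*r1B < w1*R1C" using \<open>w1 > 0\<close> r1B RR by simp
    ultimately show False by simp
  qed
  have w1: "w1 > 0"
  proof (rule ccontr)
    assume "\<not> w1 > 0"
    then have "w1 = 0" using assms(17) by auto
    then have "w2 * log 2 (1+P*bB) \<le> c" "c = w2 * fC r1C" using supB[of 0] fB0 R1B0 assms(22) e2C by auto
    moreover have "fC r1C \<le> fC 0" using decC[of 0 r1C] r1C by (cases "r1C = 0") auto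
    ultimately have "w2 * log 2 (1+P*bB) \<le> w2 * log 2 (1+P*bC)" using w2 fC0
      by (metis mult_left_mono order_trans less_imp_le)
    then show False using w2 R2 by simp
  qed
  have r1BCpos: "0 < r1BC" using r1BC fB0 fC0 R2 e2BC by (cases "r1BC = 0") auto
  have r1BClt: "r1BC < R1B" using r1BC fBR fCRB e2BC by (cases "r1BC = R1B") auto
  have tang: False if tl: "w1*r1BC + w2*r2BC = c"
  proof -
    define \<delta> where "\<delta> = min r1BC (R1B - r1BC)"
    have \<delta>: "\<delta> > 0" using r1BCpos r1BClt by (simp add: \<delta>_def)
    have nb: "0 \<le> y \<and> y \<le> R1B" if "\<bar>r1BC - y\<bar> < \<delta>" for y
      using that by (auto simp: \<delta>_def abs_less_iff)
    have "((\<lambda>r. c - w1*r - w2*fB r) has_real_derivative (0 - w1*1 - w2*FFd aB bB P r1BC)) (at r1BC)"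
      by (auto intro!: derivative_eq_intros dB[OF r1BC])
    then have DB: "0 - w1*1 - w2*FFd aB bB P r1BC = 0"
    proof (rule DERIV_local_min[OF _ \<delta>])
      show "\<forall>y. \<bar>r1BC - y\<bar> < \<delta> \<longrightarrow> c - w1*r1BC - w2*fB r1BC \<le> c - w1*y - w2*fB y"
        using supB nb tl e2BC by force
    qed
    have "((\<lambda>r. c - w1*r - w2*fC r) has_real_derivative (0 - w1*1 - w2*FFd aC bC P r1BC)) (at r1BC)"
      using r1BC RR by (auto intro!: derivative_eq_intros dC[of r1BC])
    then have DC: "0 - w1*1 - w2*FFd aC bC P r1BC = 0"
    proof (rule DERIV_local_min[OF _ \<delta>])
      show "\<forall>y. \<bar>r1BC - y\<bar> < \<delta> \<longrightarrow> c - w1*r1BC - w2*fC r1BC \<le> c - w1*y - w2*fC y"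
        using supC nb tl e2BC RR by force
    qed
    have FE: "FFd aB bB P r1BC = FFd aC bC P r1BC" using DB DC w2 by simp
    define s where "s = 2 powr r1BC"
    have r1B': "r1BC \<le> log 2 (1+P*aB)" using r1BC by (simp add: R1B_def)
    note FB = powr_FF[OF pos(1,2) P r1BC(1) r1B']
    note FC = powr_FF[OF pos(3,4) P r1BC(1)]
    have s1: "1 \<le> s" using FB s_def by simp
    have r1C': "r1BC \<le> log 2 (1+P*aC)" using r1BC RR by (simp add: R1C_def)
    have VB: "Fv aB bB P s \<ge> 1" using FB(5) s_def by simp
    have VC: "Fv aC bC P s \<ge> 1" using FC(5)[OF r1C'] s_def by simp
    have "log 2 (Fv aB bB P s) = log 2 (Fv aC bC P s)"
      using e2BC by (simp add: fB_def fC_def FF_def s_def)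
    then have VE: "Fv aB bB P s = Fv aC bC P s"
      by (metis VB VC powr_log_cancel less_le_trans zero_less_one zero_less_numeral numeral_One one_less_numeral_iff semiring_norm(76) order_less_irrefl)
    have "Fvd aB bB P s = Fvd aC bC P s"
      using FE VE VB s1 by (simp add: FFd_def s_def[symmetric] field_simps)
    moreover have "Fvd aB bB P s < Fvd aC bC P s"
      by (rule transv[OF pos P ab s1 VE]) (use VB in simp)
    ultimately show False by simp
  qed
  have A: "r1B < r1BC"
  proof (rule ccontr)
    assume "\<not> r1B < r1BC"
    then consider "r1BC < r1B" | "r1BC = r1B" by linarith
    then show False
    proof cases
      case 1
      have "fB r1B < fC r1B" using dneg 1 r1B by simp
      moreover have "w1*r1B + w2*fC r1B \<le> c" using supC[of r1B] r1B RR by simp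
      ultimately have "w2*fB r1B < w2*fC r1B" using w2 by simp
      then show False using \<open>w1*r1B + w2*fC r1B \<le> c\<close> assms(21)[unfolded e2B] by linarith
    next
      case 2 then show False using tang assms(21) e2B e2BC by simp
    qed
  qed
  have B: "r1BC < r1C"
  proof (rule ccontr)
    assume "\<not> r1BC < r1C"
    then consider "r1C < r1BC" | "r1BC = r1C" by linarith
    then show False
    proof cases
      case 1
      have "fC r1C < fB r1C" using dpos 1 r1C by simp
      moreover have "w1*r1C + w2*fB r1C \<le> c" using supB[of r1C] r1C r1BC 1 by simp
      ultimately have "w2*fC r1C < w2*fB r1C" using w2 by simp
      then show False using \<open>w1*r1C + w2*fB r1C \<le> c\<close> assms(22)[unfolded e2C] by linarith
    next
      case 2 then show False using tang assms(22) e2C e2BC by simp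
    qed
  qed
  have "r2C < r2BC" using decC[of r1BC r1C] r1BC B r1C e2C e2BC by simp
  moreover have "r2BC < r2B" using decB[of r1B r1BC] r1B A r1BC e2B e2BC by simp
  moreover have "0 \<le> r2C" using nnC r1C e2C by simp
  ultimately show ?thesis using A B r1B by simp
qed

end
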